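(* Let $\ell\ge1$ be an integer and $p\in(0,1)$. Consider the random walk $(X_t)_{t\ge0}$ on $\mathbb{Z}_2^\ell$ with $X_0$ uniformly distributed on $\mathbb{Z}_2^\ell$, and let $T=\min\{t\ge 0: X_t=\mathbf{1}^\ell\}$, where $\mathbf{1}^\ell$ is the all-ones string. Then \[ \mathbb{E}[T]=\sum_{j=1}^{\ell}\binom{\ell}{j}\frac{1}{1-(1-2p)^j}. \]
   Context: $\mathbb{Z}_2^\ell$ is the group of bit strings of length $\ell$ with coordinatewise addition modulo 2. The random walk is defined by $X_{t+1}=X_t+W_{t+1}$, where $W_1,W_2,\dots$ are i.i.d., independent of $X_0$, and each $W_t$ has law $\mu(w)=p^{\|w\|}(1-p)^{\ell-\|w\|}$ with $\|w\|$ the number of ones in $w$; equivalently, at each step every bit of the current string is flipped independently with probability $p$. *)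

theory Defs
  imports "HOL-Probability.Probability"
begin

text \<open>Bit strings of length l are represented as bool lists of length l
  (True = 1). Group addition in Z_2^l is coordinatewise xor.\<close>

definition bitstrings :: "nat \<Rightarrow> bool list set" where
  "bitstrings l = {xs. length xs = l}"

definition bxor :: "bool list \<Rightarrow> bool list \<Rightarrow> bool list" where
  "bxor xs ys = map2 (\<noteq>) xs ys"

definition hweight :: "bool list \<Rightarrow> nat" where
  "hweight w = length (filter id w)"

definition unif_bits :: "nat \<Rightarrow> bool list pmf" where
  "unif_bits l = pmf_of_set (bitstrings l)"

definition step_law :: "nat \<Rightarrow> real \<Rightarrow> bool list pmf" where
  "step_law l p = embed_pmf (\<lambda>w. if length w = l
        then p ^ hweight w * (1 - p) ^ (l - hweight w) else 0)"

text \<open>Sample space: coordinate 0 is X_0 (uniform), coordinate t+1 is W_(t+1) (law mu),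
  all independent (infinite product measure).\<close>
definition walk_space :: "nat \<Rightarrow> real \<Rightarrow> (nat \<Rightarrow> bool list) measure" where
  "walk_space l p = PiM UNIV (\<lambda>i. measure_pmf (if i = 0 then unif_bits l else step_law l p))"

fun walk :: "(nat \<Rightarrow> bool list) \<Rightarrow> nat \<Rightarrow> bool list" where
  "walk \<omega> 0 = \<omega> 0"
| "walk \<omega> (Suc t) = bxor (walk \<omega> t) (\<omega> (Suc t))"

definition hit_time :: "nat \<Rightarrow> (nat \<Rightarrow> bool list) \<Rightarrow> ennreal" where
  "hit_time l \<omega> = (if \<exists>t. walk \<omega> t = replicate l True
      then of_nat (LEAST t. walk \<omega> t = replicate l True) else \<infinity>)"

end

theory Submission
  imports Defs
begin


lemma lists_len_Suc:
  "{w::bool list. length w = Suc n} = (\<lambda>(b,w). b # w) ` (UNIV \<times> {w. length w = n})"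
  by (auto simp: image_iff length_Suc_conv)

lemma sum_prod_list:
  fixes fs :: "(bool \<Rightarrow> real) list"
  shows "(\<Sum>w\<in>{w::bool list. length w = length fs}. prod_list (map2 (\<lambda>f b. f b) fs w))
       = prod_list (map (\<lambda>f. f False + f True) fs)"
proof (induction fs)
  case Nil
  then show ?case by simp
next
  case (Cons f fs)
  have inj: "inj_on (\<lambda>(b,w). b # w) (UNIV \<times> {w::bool list. length w = length fs})"
    by (auto simp: inj_on_def)
  have fin: "finite {w::bool list. length w = length fs}"
    using finite_lists_length_eq[of "UNIV::bool set"] by simp
  have "(\<Sum>w\<in>{w::bool list. length w = length (f#fs)}. prod_list (map2 (\<lambda>f b. f b) (f#fs) w))
     = (\<Sum>(b,w)\<in>UNIV \<times> {w::bool list. length w = length fs}. f b * prod_list (map2 (\<lambda>f b. f b) fs w))"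
  proof -
    have e: "{w::bool list. length w = length (f#fs)} = (\<lambda>(b,w). b # w) ` (UNIV \<times> {w. length w = length fs})"
      using lists_len_Suc[of "length fs"] by simp
    show ?thesis unfolding e by (subst sum.reindex[OF inj]) (simp add: case_prod_unfold)
  qed
  also have "\<dots> = (\<Sum>b\<in>UNIV. \<Sum>w\<in>{w::bool list. length w = length fs}. f b * prod_list (map2 (\<lambda>f b. f b) fs w))"
    by (rule sum.cartesian_product[symmetric])
  also have "\<dots> = (\<Sum>b\<in>UNIV. f b * prod_list (map (\<lambda>f. f False + f True) fs))"
    by (simp add: sum_distrib_left[symmetric] Cons.IH)
  also have "\<dots> = prod_list (map (\<lambda>f. f False + f True) (f#fs))"
    by (simp add: UNIV_bool algebra_simps)
  finally show ?case .
qed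



definition beta :: "real \<Rightarrow> bool \<Rightarrow> real" where
  "beta p b = (if b then p else 1 - p)"

lemma hweight_Cons[simp]: "hweight (b # w) = (if b then 1 else 0) + hweight w"
  by (simp add: hweight_def)
lemma hweight_le: "hweight w \<le> length w"
  by (simp add: hweight_def)

lemma hw_prod: "prod_list (map (beta p) w) = p ^ hweight w * (1-p)^(length w - hweight w)"
proof (induction w)
  case Nil then show ?case by (simp add: hweight_def)
next
  case (Cons b w)
  have e: "Suc (length w) - hweight w = Suc (length w - hweight w)" using hweight_le[of w] by simp
  show ?case
  proof (cases b)
    case True then show ?thesis using Cons by (simp add: beta_def)
  next
    case False then show ?thesis using Cons by (simp add: beta_def e)
  qed
qed

lemma map2_replicate: "length w = n \<Longrightarrow> map2 (\<lambda>f b. f b) (replicate n g) w = map g w"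
  by (induction w arbitrary: n) (auto simp: Suc_length_conv)

lemma step_sum: "(\<Sum>w\<in>{w::bool list. length w = l}. prod_list (map (beta p) w)) = 1"
proof -
  have "(\<Sum>w\<in>{w::bool list. length w = l}. prod_list (map (beta p) w))
     = (\<Sum>w\<in>{w::bool list. length w = length (replicate l (beta p))}. prod_list (map2 (\<lambda>f b. f b) (replicate l (beta p)) w))"
    by (intro sum.cong) (auto simp: map2_replicate)
  also have "\<dots> = 1" by (subst sum_prod_list) (simp add: beta_def)
  finally show ?thesis .
qed

lemma finite_bitstrings: "finite {w::bool list. length w = l}"
  using finite_lists_length_eq[of "UNIV::bool set"] by simp

lemma card_bitstrings: "card (bitstrings l) = 2 ^ l"
  using card_lists_length_eq[of "UNIV::bool set" l] by (simp add: bitstrings_def)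

lemma beta_nonneg: "0 \<le> p \<Longrightarrow> p \<le> 1 \<Longrightarrow> 0 \<le> beta p b"
  by (simp add: beta_def)

lemma pmf_step:
  assumes "0 \<le> p" "p \<le> 1"
  shows "pmf (step_law l p) w = (if length w = l then prod_list (map (beta p) w) else 0)"
proof -
  let ?f = "\<lambda>w. if length w = l then p ^ hweight w * (1 - p) ^ (l - hweight w) else 0"
  have nn: "\<And>w. 0 \<le> ?f w" using assms by auto
  have "(\<integral>\<^sup>+x. ennreal (?f x) \<partial>count_space UNIV) = (\<Sum>x\<in>{w::bool list. length w = l}. ennreal (?f x))"
    by (rule nn_integral_count_space'[OF finite_bitstrings]) auto
  also have "\<dots> = ennreal (\<Sum>x\<in>{w::bool list. length w = l}. ?f x)"
    by (rule sum_ennreal) (use assms in auto)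
  also have "(\<Sum>x\<in>{w::bool list. length w = l}. ?f x) = (\<Sum>w\<in>{w::bool list. length w = l}. prod_list (map (beta p) w))"
    by (intro sum.cong) (auto simp: hw_prod)
  finally have pr: "(\<integral>\<^sup>+x. ennreal (?f x) \<partial>count_space UNIV) = 1" by (simp add: step_sum)
  show ?thesis unfolding step_law_def pmf_embed_pmf[OF nn pr] by (simp add: hw_prod)
qed

lemma set_step:
  assumes "0 < p" "p < 1"
  shows "set_pmf (step_law l p) = bitstrings l"
proof -
  have "\<And>w. prod_list (map (beta p) w) \<noteq> 0"
    using assms by (simp add: hw_prod)
  then show ?thesis using assms by (auto simp: set_pmf_eq pmf_step bitstrings_def)
qed

lemma bitstrings_ne: "bitstrings l \<noteq> {}"
  by (auto simp: bitstrings_def intro!: exI[of _ "replicate l True"])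

lemma pmf_unif: "pmf (unif_bits l) x = (if length x = l then 1 / 2 ^ l else 0)"
  unfolding unif_bits_def using bitstrings_ne[of l] finite_bitstrings[of l]
  by (simp add: bitstrings_def card_bitstrings[unfolded bitstrings_def])

lemma set_unif: "set_pmf (unif_bits l) = bitstrings l"
  unfolding unif_bits_def using bitstrings_ne[of l] finite_bitstrings[of l]
  by (simp add: bitstrings_def)



lemma binom_split:
  fixes x :: real
  shows "(1 + x) ^ l = 1 + (\<Sum>j\<in>{1..l}. real (l choose j) * x ^ j)"
proof -
  have "(1 + x) ^ l = (x + 1) ^ l" by (simp add: add.commute)
  also have "\<dots> = (\<Sum>k\<le>l. real (l choose k) * x ^ k)"
    by (simp add: binomial_ring)
  also have "{..l} = insert 0 {1..l}" by auto
  finally show ?thesis by simp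
qed

lemma swap_tri:
  fixes h :: "nat \<Rightarrow> nat \<Rightarrow> real"
  shows "(\<Sum>t\<le>N. \<Sum>s\<le>t. h s (t - s)) = (\<Sum>s\<le>N. \<Sum>k\<le>N - s. h s k)"
proof -
  have "(\<Sum>t\<le>N. \<Sum>s\<le>t. h s (t - s)) = (\<Sum>t\<in>{..N}. \<Sum>s\<in>{s. s \<in> {..N} \<and> s \<le> t}. h s (t - s))"
    by (intro sum.cong) auto
  also have "\<dots> = (\<Sum>s\<in>{..N}. \<Sum>t\<in>{t. t \<in> {..N} \<and> s \<le> t}. h s (t - s))"
    by (rule sum.swap_restrict) auto
  also have "\<dots> = (\<Sum>s\<le>N. \<Sum>k\<le>N - s. h s k)"
  proof (rule sum.cong[OF refl])
    fix s assume "s \<in> {..N}"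
    then have sN: "s \<le> N" by simp
    have "{t. t \<in> {..N} \<and> s \<le> t} = {0 + s..(N - s) + s}" using sN by auto
    then have "(\<Sum>t\<in>{t. t \<in> {..N} \<and> s \<le> t}. h s (t - s)) = (\<Sum>k\<in>{0..N - s}. h s (k + s - s))"
      by (simp only: sum.shift_bounds_cl_nat_ivl)
    also have "\<dots> = (\<Sum>k\<le>N - s. h s k)" by (simp add: atLeast0AtMost)
    finally show "(\<Sum>t\<in>{t. t \<in> {..N} \<and> s \<le> t}. h s (t - s)) = (\<Sum>k\<le>N - s. h s k)" .
  qed
  finally show ?thesis .
qed

lemma geom_bound:
  fixes x :: real
  assumes "\<bar>x\<bar> < 1"
  shows "\<bar>\<Sum>k\<le>m. x ^ k\<bar> \<le> 1 / (1 - \<bar>x\<bar>)"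
proof -
  have "\<bar>\<Sum>k\<le>m. x ^ k\<bar> \<le> (\<Sum>k\<le>m. \<bar>x\<bar> ^ k)"
    by (rule order.trans[OF sum_abs]) (simp add: power_abs)
  also have "\<dots> = (\<Sum>k<Suc m. \<bar>x\<bar> ^ k)" by (simp add: lessThan_Suc_atMost)
  also have "\<dots> = (\<bar>x\<bar> ^ Suc m - 1) / (\<bar>x\<bar> - 1)"
    using assms by (intro geometric_sum) simp
  also have "\<dots> = (1 - \<bar>x\<bar> ^ Suc m) / (1 - \<bar>x\<bar>)"
    using assms by (simp add: field_simps)
  also have "\<dots> \<le> 1 / (1 - \<bar>x\<bar>)"
    using assms by (intro divide_right_mono) auto
  finally show ?thesis .
qed

lemma analytic:
  fixes f :: "nat \<Rightarrow> real" and L :: real and l :: nat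
  assumes f0: "\<And>s. 0 \<le> f s" and L1: "\<bar>L\<bar> < 1"
    and ren: "\<And>t. (\<Sum>s\<le>t. f s * (1 + L ^ (t - s)) ^ l) = 1"
    and F1: "\<And>t. (\<Sum>s\<le>t. f s) \<le> 1"
  shows "summable (\<lambda>t. 1 - (\<Sum>s\<le>t. f s))"
    and "(\<Sum>t. 1 - (\<Sum>s\<le>t. f s)) = (\<Sum>j\<in>{1..l}. real (l choose j) / (1 - L ^ j))"
proof -
  define c where "c m = (\<Sum>j\<in>{1..l}. real (l choose j) * (L ^ j) ^ m)" for m
  define Cc where "Cc m = (\<Sum>k\<le>m. c k)" for m
  define Cinf where "Cinf = (\<Sum>j\<in>{1..l}. real (l choose j) / (1 - L ^ j))"
  define F where "F t = (\<Sum>s\<le>t. f s)" for t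
  define S where "S N = (\<Sum>t\<le>N. (1 - F t))" for N
  have Lj: "\<bar>L ^ j\<bar> < 1" if "j \<in> {1..l}" for j
  proof -
    have "\<bar>L\<bar> ^ j \<le> \<bar>L\<bar> ^ 1" using that L1 by (intro power_decreasing) auto
    then show ?thesis using L1 by (simp add: power_abs)
  qed
  have oneF: "1 - F t = (\<Sum>s\<le>t. f s * c (t - s))" for t
  proof -
    have "1 = (\<Sum>s\<le>t. f s * (1 + c (t - s)))"
      using ren[of t] by (simp add: binom_split c_def power_mult[symmetric] mult.commute)
    also have "\<dots> = F t + (\<Sum>s\<le>t. f s * c (t - s))"
      by (simp add: F_def algebra_simps sum.distrib)
    finally show ?thesis by simp
  qed
  have SN: "S N = (\<Sum>s\<le>N. f s * Cc (N - s))" for N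
    unfolding S_def oneF Cc_def using swap_tri[of "\<lambda>s k. f s * c k" N]
    by (simp add: sum_distrib_left)
  have Cc_eq: "Cc m = (\<Sum>j\<in>{1..l}. real (l choose j) * (\<Sum>k<Suc m. (L ^ j) ^ k))" for m
    unfolding Cc_def c_def by (subst sum.swap) (simp add: sum_distrib_left lessThan_Suc_atMost)
  have Cc_lim: "Cc \<longlonglongrightarrow> Cinf"
  proof -
    have e: "Cc = (\<lambda>m. \<Sum>j\<in>{1..l}. real (l choose j) * (\<Sum>k<Suc m. (L ^ j) ^ k))"
      by (rule ext) (rule Cc_eq)
    show ?thesis unfolding e
      unfolding Cinf_def divide_inverse
    proof (intro tendsto_sum tendsto_mult tendsto_const)
      fix j assume "j \<in> {1..l}"
      then have "(\<lambda>k. (L ^ j) ^ k) sums (1 / (1 - L ^ j))" using Lj by (intro geometric_sums) simp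
      then have "(\<lambda>m. \<Sum>k<m. (L ^ j) ^ k) \<longlonglongrightarrow> 1 / (1 - L ^ j)" by (simp add: sums_def)
      then show "(\<lambda>m. \<Sum>k<Suc m. (L ^ j) ^ k) \<longlonglongrightarrow> inverse (1 - L ^ j)"
        by (subst filterlim_sequentially_Suc) (simp add: inverse_eq_divide)
    qed
  qed
  define Bd where "Bd = (\<Sum>j\<in>{1..l}. real (l choose j) * (1 / (1 - \<bar>L\<bar>)))"
  have Cc_bd: "\<bar>Cc m\<bar> \<le> Bd" for m
  proof -
    have "\<bar>Cc m\<bar> \<le> (\<Sum>j\<in>{1..l}. \<bar>real (l choose j) * (\<Sum>k<Suc m. (L ^ j) ^ k)\<bar>)"
      unfolding Cc_eq by (rule sum_abs)
    also have "\<dots> \<le> Bd" unfolding Bd_def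
    proof (rule sum_mono)
      fix j assume j: "j \<in> {1..l}"
      have "\<bar>\<Sum>k<Suc m. (L ^ j) ^ k\<bar> \<le> 1 / (1 - \<bar>L ^ j\<bar>)"
        using geom_bound[OF Lj[OF j], of m] by (simp add: lessThan_Suc_atMost)
      also have "\<dots> \<le> 1 / (1 - \<bar>L\<bar>)"
      proof -
        have "\<bar>L\<bar> ^ j \<le> \<bar>L\<bar> ^ 1" using j L1 by (intro power_decreasing) auto
        then show ?thesis using L1 Lj[OF j] by (intro divide_left_mono) (auto simp: power_abs)
      qed
      finally have h: "\<bar>\<Sum>k<Suc m. (L ^ j) ^ k\<bar> \<le> 1 / (1 - \<bar>L\<bar>)" .
      have "\<bar>real (l choose j) * (\<Sum>k<Suc m. (L ^ j) ^ k)\<bar> = real (l choose j) * \<bar>\<Sum>k<Suc m. (L ^ j) ^ k\<bar>"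
        by (simp only: abs_mult abs_of_nat)
      also have "\<dots> \<le> real (l choose j) * (1 / (1 - \<bar>L\<bar>))"
        by (rule mult_left_mono[OF h]) simp
      finally show "\<bar>real (l choose j) * (\<Sum>k<Suc m. (L ^ j) ^ k)\<bar> \<le> real (l choose j) * (1 / (1 - \<bar>L\<bar>))" .
    qed
    finally show ?thesis .
  qed
  have fsum: "summable f"
  proof (rule summableI_nonneg_bounded[where x=1])
    fix n show "sum f {..<n} \<le> 1"
    proof (cases n)
      case 0 then show ?thesis by simp
    next
      case (Suc m) then show ?thesis using F1[of m] by (simp add: lessThan_Suc_atMost)
    qed
  qed (rule f0)
  have Bd0: "0 \<le> Bd" using Cc_bd[of 0] by linarith
  define a where "a s N = (if s \<le> N then f s * Cc (N - s) else 0)" for s N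
  have sumA: "(\<Sum>s. a s N) = S N" for N
  proof -
    have "(\<Sum>s. a s N) = (\<Sum>s\<in>{..N}. a s N)"
      by (rule suminf_finite) (auto simp: a_def)
    also have "\<dots> = S N" by (simp add: SN a_def)
    finally show ?thesis .
  qed
  have tann: "(\<lambda>N. \<Sum>s. a s N) \<longlonglongrightarrow> (\<Sum>s. f s * Cinf)"
  proof -
    have "eventually (\<lambda>N. summable (\<lambda>k. norm (a k N))) sequentially \<and>
           summable (\<lambda>n. norm (f n * Cinf)) \<and>
           ((\<lambda>N. \<Sum>s. a s N) \<longlonglongrightarrow> (\<Sum>s. f s * Cinf))"
    proof (rule tannerys_theorem[where M="\<lambda>s. f s * Bd"])
      fix k
      have "(\<lambda>n. a k (n + k)) = (\<lambda>n. f k * Cc n)" by (simp add: a_def)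
      then have "(\<lambda>n. a k (n + k)) \<longlonglongrightarrow> f k * Cinf" using Cc_lim by (simp add: tendsto_mult_left)
      then show "(\<lambda>n. a k n) \<longlonglongrightarrow> f k * Cinf" by (rule LIMSEQ_offset)
    next
      show "\<forall>\<^sub>F (k, n) in at_top \<times>\<^sub>F sequentially. norm (a k n) \<le> f k * Bd"
      proof (rule always_eventually, safe)
        fix k n
        show "norm (a k n) \<le> f k * Bd"
          using f0[of k] Cc_bd[of "n - k"] Bd0
          by (auto simp: a_def abs_mult intro: mult_left_mono)
      qed
      show "summable (\<lambda>s. f s * Bd)" by (rule summable_mult2[OF fsum])
    qed simp
    then show ?thesis by blast
  qed
  have Slim: "S \<longlonglongrightarrow> suminf f * Cinf"
    using tann by (simp add: sumA suminf_mult2[OF fsum])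
  have sums1: "(\<lambda>t. 1 - F t) sums (suminf f * Cinf)"
    unfolding sums_def by (subst filterlim_sequentially_Suc[symmetric]) (simp add: S_def[symmetric] lessThan_Suc_atMost Slim)
  have "(\<lambda>t. 1 - F t) \<longlonglongrightarrow> 0" by (rule summable_LIMSEQ_zero[OF sums_summable[OF sums1]])
  moreover have "(\<lambda>t. 1 - F t) \<longlonglongrightarrow> 1 - suminf f"
  proof -
    have "(\<lambda>n. \<Sum>s<n. f s) \<longlonglongrightarrow> suminf f" using fsum by (simp add: summable_LIMSEQ)
    then have "(\<lambda>n. \<Sum>s<Suc n. f s) \<longlonglongrightarrow> suminf f" by (rule LIMSEQ_Suc)
    moreover have "F = (\<lambda>n. \<Sum>s<Suc n. f s)" by (simp add: F_def fun_eq_iff lessThan_Suc_atMost)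
    ultimately have "F \<longlonglongrightarrow> suminf f" by simp
    then show ?thesis by (intro tendsto_diff tendsto_const)
  qed
  ultimately have "1 - suminf f = 0" using LIMSEQ_unique by blast
  then have Phi: "suminf f = 1" by simp
  show "summable (\<lambda>t. 1 - (\<Sum>s\<le>t. f s))" using sums_summable[OF sums1] by (simp add: F_def)
  show "(\<Sum>t. 1 - (\<Sum>s\<le>t. f s)) = (\<Sum>j\<in>{1..l}. real (l choose j) / (1 - L ^ j))"
    using sums_unique[OF sums1] Phi by (simp add: F_def Cinf_def)
qed



definition D :: "nat \<Rightarrow> real \<Rightarrow> nat \<Rightarrow> bool list measure" where
  "D l p i = measure_pmf (if i = 0 then unif_bits l else step_law l p)"

lemma walk_space_D: "walk_space l p = PiM UNIV (D l p)"
  unfolding walk_space_def D_def by simp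

locale wk =
  fixes l :: nat and p :: real
  assumes l1: "1 \<le> l" and p0: "0 < p" and p1: "p < 1"
begin

abbreviation "M \<equiv> walk_space l p"

sublocale PS: product_prob_space "D l p" UNIV
  apply unfold_locales
    apply (rule exI[of _ "{UNIV}"])
  by (auto simp: D_def)

lemma psM: "prob_space M"
  unfolding walk_space_D by (rule PS.P.prob_space_axioms)

sublocale PM: prob_space M by (rule psM)

lemma meas_D[simp]: "measurable N (D l p i) = measurable N (count_space UNIV)"
  by (simp add: D_def)

lemma sets_D[simp]: "sets (D l p i) = UNIV"
  by (simp add: D_def)

lemma space_M[simp]: "space M = UNIV"
  by (simp add: walk_space_D space_PiM D_def)

lemma sets_M_eq: "sets M = sets (PiM UNIV (D l p))"
  by (simp add: walk_space_D)

lemma meas_coord: "i \<in> A \<Longrightarrow> (\<lambda>\<omega>. \<omega> i) \<in> measurable (PiM A (D l p)) (count_space UNIV)"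
  using measurable_component_singleton[of i A "D l p"] by simp

lemma meas_bxor:
  assumes "f \<in> measurable N (count_space UNIV)" "g \<in> measurable N (count_space UNIV)"
  shows "(\<lambda>x. bxor (f x) (g x)) \<in> measurable N (count_space UNIV)"
proof -
  have "\<And>a. (\<lambda>x. bxor a (g x)) \<in> measurable N (count_space UNIV)"
    by (rule measurable_compose_countable[where g=g]) (auto intro: assms)
  then show ?thesis
    by (rule measurable_compose_countable[where g=f]) (auto intro: assms)
qed

lemma meas_walk: "{..t} \<subseteq> A \<Longrightarrow> (\<lambda>\<omega>. walk \<omega> t) \<in> measurable (PiM A (D l p)) (count_space UNIV)"
proof (induction t)
  case 0 then show ?case by (simp add: meas_coord)
next
  case (Suc t)
  have "{..t} \<subseteq> A" "Suc t \<in> A" using Suc.prems by auto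
  then show ?case using Suc.IH by (auto intro!: meas_bxor meas_coord)
qed

lemma walk_restrict: "{..t} \<subseteq> A \<Longrightarrow> walk (restrict \<omega> A) t = walk \<omega> t"
proof (induction t)
  case 0 then show ?case by simp
next
  case (Suc t)
  have "{..t} \<subseteq> A" "Suc t \<in> A" using Suc.prems by auto
  then show ?case using Suc.IH by simp
qed

lemma meas_walk_M: "(\<lambda>\<omega>. walk \<omega> t) \<in> measurable M (count_space UNIV)"
  using meas_walk[of t UNIV] by (simp add: walk_space_D)

lemma indep_coords: "PM.indep_vars (D l p) (\<lambda>i \<omega>. \<omega> i) UNIV"
  unfolding PM.indep_vars_def2
proof (intro conjI ballI PM.indep_setsI)
  fix i :: nat
  have "(\<lambda>\<omega>. \<omega> i) \<in> measurable M (count_space UNIV)"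
    using meas_coord[of i UNIV] by (simp add: walk_space_D)
  then show "PM.random_variable (D l p i) (\<lambda>\<omega>. \<omega> i)" unfolding meas_D .
next
  fix i :: nat
  show "{(\<lambda>\<omega>. \<omega> i) -` A \<inter> space M |A. A \<in> sets (D l p i)} \<subseteq> PM.events"
    using meas_coord[of i UNIV] by (auto simp: walk_space_D measurable_def)
next
  fix A :: "nat \<Rightarrow> _" and J :: "nat set"
  assume J: "J \<noteq> {}" "finite J" and AJ: "\<forall>j\<in>J. A j \<in> {(\<lambda>\<omega>. \<omega> j) -` A \<inter> space M |A. A \<in> sets (D l p j)}"
  have "\<forall>j\<in>J. \<exists>B. A j = {\<omega>. \<omega> j \<in> B}"
  proof
    fix j assume "j \<in> J"
    then obtain B where "A j = (\<lambda>\<omega>. \<omega> j) -` B \<inter> space M" using AJ by blast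
    then show "\<exists>B. A j = {\<omega>. \<omega> j \<in> B}" by (auto simp: vimage_def)
  qed
  then obtain B where B: "\<And>j. j \<in> J \<Longrightarrow> A j = {\<omega>. \<omega> j \<in> B j}"
    using bchoice[of J "\<lambda>j B. A j = {\<omega>. \<omega> j \<in> B}"] by blast
  have "(\<Inter>j\<in>J. A j) = {x\<in>space (PiM UNIV (D l p)). \<forall>j\<in>J. x j \<in> B j}"
    using J B by (auto simp: walk_space_D[symmetric])
  then have e1: "emeasure M (\<Inter>j\<in>J. A j) = (\<Prod>j\<in>J. emeasure (D l p j) (B j))"
    using PS.emeasure_PiM_Collect[of J B] J by (simp add: walk_space_D)
  have e2: "emeasure M (A j) = emeasure (D l p j) (B j)" if "j \<in> J" for j
  proof -
    have "A j = {x\<in>space (PiM UNIV (D l p)). x j \<in> B j}"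
      using B[OF that] by (auto simp: walk_space_D[symmetric])
    then show ?thesis using PS.emeasure_PiM_Collect_single[of j "B j"] by (simp add: walk_space_D)
  qed
  have "ennreal (measure M (\<Inter>j\<in>J. A j)) = ennreal (\<Prod>j\<in>J. measure M (A j))"
    using e1 e2 by (simp add: PM.emeasure_eq_measure PS.M.emeasure_eq_measure prod_ennreal)
  then show "measure M (\<Inter>j\<in>J. A j) = (\<Prod>j\<in>J. measure M (A j))"
    by (simp add: prod_nonneg)
qed

lemma indep2:
  fixes f :: "(nat \<Rightarrow> bool list) \<Rightarrow> 'b::countable" and g :: "(nat \<Rightarrow> bool list) \<Rightarrow> 'b"
  assumes AB: "A \<inter> B = {}"
    and f: "f \<in> measurable (PiM A (D l p)) (count_space UNIV)"
    and g: "g \<in> measurable (PiM B (D l p)) (count_space UNIV)"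
    and fl: "\<And>\<omega>. f (restrict \<omega> A) = f \<omega>" and gl: "\<And>\<omega>. g (restrict \<omega> B) = g \<omega>"
  shows "measure M {\<omega>. f \<omega> \<in> X \<and> g \<omega> \<in> Y} = measure M {\<omega>. f \<omega> \<in> X} * measure M {\<omega>. g \<omega> \<in> Y}"
proof -
  have iv: "PM.indep_var (PiM A (D l p)) (\<lambda>\<omega>. restrict (\<lambda>i. \<omega> i) A) (PiM B (D l p)) (\<lambda>\<omega>. restrict (\<lambda>i. \<omega> i) B)"
    by (rule PM.indep_var_restrict[OF indep_coords AB]) auto
  have iv2: "PM.indep_var (count_space UNIV) (f \<circ> (\<lambda>\<omega>. restrict (\<lambda>i. \<omega> i) A)) (count_space UNIV) (g \<circ> (\<lambda>\<omega>. restrict (\<lambda>i. \<omega> i) B))"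
    by (rule PM.indep_var_compose[OF iv f g])
  have "measure M ((\<lambda>x. ((f \<circ> (\<lambda>\<omega>. restrict (\<lambda>i. \<omega> i) A)) x, (g \<circ> (\<lambda>\<omega>. restrict (\<lambda>i. \<omega> i) B)) x)) -` (X \<times> Y) \<inter> space M)
    = measure M ((f \<circ> (\<lambda>\<omega>. restrict (\<lambda>i. \<omega> i) A)) -` X \<inter> space M) * measure M ((g \<circ> (\<lambda>\<omega>. restrict (\<lambda>i. \<omega> i) B)) -` Y \<inter> space M)"
    by (rule PM.indep_varD[OF iv2]) auto
  then show ?thesis using fl gl by (simp add: vimage_def)
qed

end


lemma length_bxor[simp]: "length (bxor x y) = min (length x) (length y)"
  by (simp add: bxor_def)

lemma bxor_Cons[simp]: "bxor (a # x) (b # y) = (a \<noteq> b) # bxor x y"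
  by (simp add: bxor_def)
lemma bxor_Nil[simp]: "bxor [] y = []" "bxor x [] = []"
  by (auto simp: bxor_def)

lemma bxor_iff:
  "length x = length w \<Longrightarrow> length x = length y \<Longrightarrow> (bxor x w = y) = (w = bxor x y)"
proof (induction x arbitrary: w y)
  case Nil then show ?case by simp
next
  case (Cons a x)
  then obtain b w' c y' where "w = b # w'" "y = c # y'"
    by (metis length_Suc_conv)
  then show ?case using Cons by auto
qed

context wk begin

lemma meas1:
  fixes f :: "_ \<Rightarrow> 'a::countable"
  assumes "f \<in> measurable N (count_space UNIV)"
  shows "(\<lambda>x. F (f x)) \<in> measurable N (count_space UNIV)"
  using measurable_compose[OF assms measurable_count_space[of F UNIV]] by (simp add: o_def)

lemma meas2:
  fixes f :: "_ \<Rightarrow> 'a::countable" and g :: "_ \<Rightarrow> 'b::countable"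
  assumes "f \<in> measurable N (count_space UNIV)" "g \<in> measurable N (count_space UNIV)"
  shows "(\<lambda>x. F (f x) (g x)) \<in> measurable N (count_space UNIV)"
proof -
  have "\<And>a. (\<lambda>x. F a (g x)) \<in> measurable N (count_space UNIV)"
    by (rule meas1[OF assms(2)])
  then show ?thesis
    by (rule measurable_compose_countable[where g=f]) (auto intro: assms)
qed

lemma ev:
  fixes h :: "_ \<Rightarrow> bool"
  assumes "h \<in> measurable M (count_space UNIV)"
  shows "{\<omega>. h \<omega>} \<in> PM.events"
proof -
  have "{\<omega>. h \<omega>} = h -` {True} \<inter> space M" by auto
  then show ?thesis using measurable_sets[OF assms, of "{True}"] by simp
qed

lemma ev_eq:
  assumes "g \<in> measurable M (count_space UNIV)"
  shows "{\<omega>. g \<omega> = c} \<in> PM.events"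
proof -
  have "{\<omega>. g \<omega> = c} = g -` {c} \<inter> space M" by auto
  then show ?thesis using measurable_sets[OF assms, of "{c}"] by simp
qed

lemma lift_meas:
  fixes f :: "_ \<Rightarrow> 'a::countable"
  assumes fm: "f \<in> measurable (PiM A (D l p)) (count_space UNIV)" and fl: "\<And>\<omega>. f (restrict \<omega> A) = f \<omega>"
    and AB: "A \<subseteq> B"
  shows "f \<in> measurable (PiM B (D l p)) (count_space UNIV)"
proof -
  have "(\<lambda>x. f (restrict x A)) \<in> measurable (PiM B (D l p)) (count_space UNIV)"
    using measurable_compose[OF measurable_restrict_subset[OF AB] fm] by (simp add: o_def)
  then show ?thesis using fl by simp
qed

lemma lift_loc:
  assumes fl: "\<And>\<omega>. f (restrict \<omega> A) = f \<omega>" and AB: "A \<subseteq> B"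
  shows "f (restrict \<omega> B) = f \<omega>"
proof -
  have "restrict (restrict \<omega> B) A = restrict \<omega> A" using AB by (auto simp: restrict_def fun_eq_iff)
  then show ?thesis by (metis fl)
qed

lemma meas_M:
  fixes f :: "_ \<Rightarrow> 'a::countable"
  assumes fm: "f \<in> measurable (PiM A (D l p)) (count_space UNIV)" and fl: "\<And>\<omega>. f (restrict \<omega> A) = f \<omega>"
  shows "f \<in> measurable M (count_space UNIV)"
  using lift_meas[of f A UNIV] fm fl by (simp add: walk_space_D)

lemma AE_len: "AE \<omega> in M. \<forall>i. length (\<omega> i) = l"
proof -
  have "\<And>i. AE \<omega> in M. length (\<omega> i) = l"
  proof -
    fix i
    have "AE x in D l p i. length x = l"
      using set_step[OF p0 p1, of l] set_unif[of l]
      unfolding Submission.D_def by (cases "i = 0") (auto simp: bitstrings_def intro!: AE_pmfI)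
    then show "AE \<omega> in M. length (\<omega> i) = l"
      unfolding walk_space_D by (rule PS.AE_component[rotated]) simp
  qed
  then show ?thesis by (simp add: AE_all_countable)
qed

lemma coord_law: "measure M {\<omega>. \<omega> i \<in> X} = measure (D l p i) X"
proof -
  have "emeasure M {\<omega>. \<omega> i \<in> X} = emeasure (D l p i) X"
    using PS.emeasure_PiM_Collect_single[of i X] by (simp add: walk_space_D space_PiM D_def)
  then show ?thesis by (simp add: PM.emeasure_eq_measure PS.M.emeasure_eq_measure)
qed

lemma coord_step: "measure M {\<omega>. \<omega> (Suc k) = w} = pmf (step_law l p) w"
  using coord_law[of "Suc k" "{w}"] by (simp add: D_def measure_pmf_single)

lemma coord_0: "measure M {\<omega>. \<omega> 0 = w} = pmf (unif_bits l) w"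
  using coord_law[of 0 "{w}"] by (simp add: D_def measure_pmf_single)

lemma length_walk: "\<forall>i. length (\<omega> i) = l \<Longrightarrow> length (walk \<omega> t) = l"
  by (induction t) auto

lemma step_lemma:
  fixes f :: "_ \<Rightarrow> bool"
  assumes fm: "f \<in> measurable (PiM {..k} (D l p)) (count_space UNIV)"
    and fl: "\<And>\<omega>. f (restrict \<omega> {..k}) = f \<omega>" and y: "length y = l"
  shows "measure M {\<omega>. f \<omega> \<and> walk \<omega> (Suc k) = y}
       = (\<Sum>x\<in>bitstrings l. measure M {\<omega>. f \<omega> \<and> walk \<omega> k = x} * pmf (step_law l p) (bxor x y))"
proof -
  have fM: "f \<in> measurable M (count_space UNIV)" using meas_M[of f "{..k}"] fm fl by blast
  let ?E = "\<lambda>x. {\<omega>. f \<omega> \<and> walk \<omega> k = x \<and> \<omega> (Suc k) = bxor x y}"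
  have c1: "(\<lambda>\<omega>. \<omega> (Suc k)) \<in> measurable M (count_space UNIV)"
    using meas_coord[of "Suc k" UNIV] by (simp add: walk_space_D)
  have evE: "?E x \<in> PM.events" for x
  proof -
    have "?E x = {\<omega>. f \<omega> = True} \<inter> ({\<omega>. walk \<omega> k = x} \<inter> {\<omega>. \<omega> (Suc k) = bxor x y})" by auto
    then show ?thesis using ev_eq[OF fM, of True] ev_eq[OF meas_walk_M, of k x] ev_eq[OF c1, of "bxor x y"]
      by simp
  qed
  have ev1: "{\<omega>. f \<omega> \<and> walk \<omega> (Suc k) = y} \<in> PM.events"
  proof -
    have "{\<omega>. f \<omega> \<and> walk \<omega> (Suc k) = y} = {\<omega>. f \<omega> = True} \<inter> {\<omega>. walk \<omega> (Suc k) = y}" by auto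
    then show ?thesis using ev_eq[OF fM, of True] ev_eq[OF meas_walk_M, of "Suc k" y]
      by simp
  qed
  have "measure M {\<omega>. f \<omega> \<and> walk \<omega> (Suc k) = y} = measure M (\<Union>x\<in>bitstrings l. ?E x)"
  proof (rule measure_eq_AE)
    show "AE \<omega> in M. (\<omega> \<in> {\<omega>. f \<omega> \<and> walk \<omega> (Suc k) = y}) = (\<omega> \<in> (\<Union>x\<in>bitstrings l. ?E x))"
      using AE_len
    proof (rule AE_mp, intro AE_I2 impI)
      fix \<omega> :: "nat \<Rightarrow> bool list" assume len: "\<forall>i. length (\<omega> i) = l"
      have lw: "length (walk \<omega> k) = l" by (rule length_walk[OF len])
      have "bxor (walk \<omega> k) (\<omega> (Suc k)) = y \<longleftrightarrow> \<omega> (Suc k) = bxor (walk \<omega> k) y"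
        using bxor_iff[of "walk \<omega> k" "\<omega> (Suc k)" y] lw len y by simp
      then show "(\<omega> \<in> {\<omega>. f \<omega> \<and> walk \<omega> (Suc k) = y}) = (\<omega> \<in> (\<Union>x\<in>bitstrings l. ?E x))"
        using lw by (auto simp: bitstrings_def)
    qed
  qed (use ev1 evE in auto)
  also have "\<dots> = (\<Sum>x\<in>bitstrings l. measure M (?E x))"
    by (rule PM.finite_measure_finite_Union)
       (use evE in \<open>auto simp: bitstrings_def finite_bitstrings disjoint_family_on_def\<close>)
  also have "\<dots> = (\<Sum>x\<in>bitstrings l. measure M {\<omega>. f \<omega> \<and> walk \<omega> k = x} * pmf (step_law l p) (bxor x y))"
  proof (rule sum.cong[OF refl])
    fix x
    have "measure M {\<omega>. (f \<omega> \<and> walk \<omega> k = x) \<in> {True} \<and> (\<omega> (Suc k) = bxor x y) \<in> {True}}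
       = measure M {\<omega>. (f \<omega> \<and> walk \<omega> k = x) \<in> {True}} * measure M {\<omega>. (\<omega> (Suc k) = bxor x y) \<in> {True}}"
    proof (rule indep2[of "{..k}" "{Suc k}"])
      show "(\<lambda>\<omega>. f \<omega> \<and> walk \<omega> k = x) \<in> measurable (PiM {..k} (D l p)) (count_space UNIV)"
        using meas2[where F="(\<and>)", OF fm meas1[where F="\<lambda>v. v = x", OF meas_walk[of k "{..k}"]]] by simp
      show "(\<lambda>\<omega>. \<omega> (Suc k) = bxor x y) \<in> measurable (PiM {Suc k} (D l p)) (count_space UNIV)"
        using meas1[where F="\<lambda>v. v = bxor x y", OF meas_coord[of "Suc k" "{Suc k}"]] by simp
      show "\<And>\<omega>. (f (restrict \<omega> {..k}) \<and> walk (restrict \<omega> {..k}) k = x) = (f \<omega> \<and> walk \<omega> k = x)"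
        using fl walk_restrict[of k "{..k}"] by simp
    qed auto
    then show "measure M (?E x) = measure M {\<omega>. f \<omega> \<and> walk \<omega> k = x} * pmf (step_law l p) (bxor x y)"
      by (simp add: coord_step conj_assoc)
  qed
  finally show ?thesis .
qed

end


definition Kf :: "real \<Rightarrow> nat \<Rightarrow> bool list \<Rightarrow> bool list \<Rightarrow> real" where
  "Kf L n x y = prod_list (map2 (\<lambda>u v. if u = v then (1 + L ^ n) / 2 else (1 - L ^ n) / 2) x y)"

lemma map_beta_bxor:
  "length x = length y \<Longrightarrow> map (beta p) (bxor x y) = map2 (\<lambda>f b. f b) (map (\<lambda>v b. beta p (b \<noteq> v)) y) x"
proof (induction x arbitrary: y)
  case Nil then show ?case by simp
next
  case (Cons a x)
  then obtain c y' where "y = c # y'" by (metis length_Suc_conv)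
  then show ?case using Cons by auto
qed

lemma sum_bxor:
  assumes "length y = l"
  shows "(\<Sum>x\<in>bitstrings l. prod_list (map (beta p) (bxor x y))) = 1"
proof -
  have "(\<Sum>x\<in>bitstrings l. prod_list (map (beta p) (bxor x y)))
      = (\<Sum>x\<in>{x. length x = length (map (\<lambda>v b. beta p (b \<noteq> v)) y)}. prod_list (map2 (\<lambda>f b. f b) (map (\<lambda>v b. beta p (b \<noteq> v)) y) x))"
    using assms by (intro sum.cong) (auto simp: bitstrings_def map_beta_bxor)
  also have "\<dots> = 1" by (subst sum_prod_list) (simp add: beta_def o_def, induction y, auto)
  finally show ?thesis .
qed

lemma prod_merge:
  "length x0 = length x \<Longrightarrow> length x = length y \<Longrightarrow>
   prod_list (map2 g x0 x) * prod_list (map (beta p) (bxor x y))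
   = prod_list (map2 (\<lambda>f b. f b) (map2 (\<lambda>u v b. g u b * beta p (b \<noteq> v)) x0 y) x)"
proof (induction x0 arbitrary: x y)
  case Nil then show ?case by simp
next
  case (Cons a x0)
  then obtain b x' c y' where "x = b # x'" "y = c # y'" by (metis length_Suc_conv)
  then show ?case using Cons by (auto simp: algebra_simps)
qed

lemma Kf_0: "length x = length y \<Longrightarrow> Kf L 0 x y = (if x = y then 1 else 0)"
proof (induction x arbitrary: y)
  case Nil then show ?case by (simp add: Kf_def)
next
  case (Cons a x)
  then obtain c y' where "y = c # y'" by (metis length_Suc_conv)
  then show ?case using Cons by (auto simp: Kf_def)
qed

lemma Kf_step:
  assumes x0: "length x0 = l" and y: "length y = l"
  shows "(\<Sum>x\<in>bitstrings l. Kf (1 - 2*p) n x0 x * prod_list (map (beta p) (bxor x y))) = Kf (1 - 2*p) (Suc n) x0 y"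
proof -
  define L where "L = 1 - 2 * p"
  define g :: "bool \<Rightarrow> bool \<Rightarrow> real" where "g = (\<lambda>u v. if u = v then (1 + L ^ n) / 2 else (1 - L ^ n) / 2)"
  let ?fs = "map2 (\<lambda>u v b. g u b * beta p (b \<noteq> v)) x0 y"
  have "(\<Sum>x\<in>bitstrings l. Kf L n x0 x * prod_list (map (beta p) (bxor x y)))
     = (\<Sum>x\<in>{x. length x = length ?fs}. prod_list (map2 (\<lambda>f b. f b) ?fs x))"
    using x0 y by (intro sum.cong) (auto simp: bitstrings_def Kf_def g_def[symmetric] prod_merge)
  also have "\<dots> = prod_list (map (\<lambda>f. f False + f True) ?fs)" by (rule sum_prod_list)
  also have "\<dots> = Kf L (Suc n) x0 y"
    unfolding Kf_def map_map
    by (intro arg_cong[where f=prod_list] map_cong refl)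
       (auto simp: g_def beta_def L_def field_simps)
  finally show ?thesis by (simp add: L_def)
qed

context wk begin

lemma prob_walk: "length y = l \<Longrightarrow> measure M {\<omega>. walk \<omega> t = y} = 1 / 2 ^ l"
proof (induction t arbitrary: y)
  case 0
  then show ?case using coord_0[of y] by (simp add: pmf_unif)
next
  case (Suc t)
  have "measure M {\<omega>. True \<and> walk \<omega> (Suc t) = y}
      = (\<Sum>x\<in>bitstrings l. measure M {\<omega>. True \<and> walk \<omega> t = x} * pmf (step_law l p) (bxor x y))"
    by (rule step_lemma) (use Suc.prems in auto)
  also have "\<dots> = (\<Sum>x\<in>bitstrings l. 1 / 2 ^ l * prod_list (map (beta p) (bxor x y)))"
    using Suc p0 p1 by (intro sum.cong) (auto simp: bitstrings_def pmf_step)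
  also have "\<dots> = 1 / 2 ^ l"
    by (subst sum_distrib_left[symmetric]) (simp add: sum_bxor Suc.prems)
  finally show ?case by simp
qed

lemma prob_renew:
  fixes f :: "_ \<Rightarrow> bool"
  assumes fm: "f \<in> measurable (PiM {..s} (D l p)) (count_space UNIV)"
    and fl: "\<And>\<omega>. f (restrict \<omega> {..s}) = f \<omega>"
    and fw: "\<And>\<omega>. f \<omega> \<Longrightarrow> walk \<omega> s = x0" and x0: "length x0 = l"
  shows "length y = l \<Longrightarrow> measure M {\<omega>. f \<omega> \<and> walk \<omega> (s + n) = y} = measure M {\<omega>. f \<omega>} * Kf (1 - 2*p) n x0 y"
proof (induction n arbitrary: y)
  case 0
  show ?case
  proof (cases "y = x0")
    case True
    then have "{\<omega>. f \<omega> \<and> walk \<omega> s = y} = {\<omega>. f \<omega>}" using fw by auto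
    then show ?thesis using True by (simp add: Kf_0)
  next
    case False
    have e: "{\<omega>. f \<omega> \<and> walk \<omega> (s + 0) = y} = {}" using fw False by auto
    show ?thesis unfolding e using False 0 x0 by (simp add: Kf_0)
  qed
next
  case (Suc n)
  have sub: "{..s} \<subseteq> {..s+n}" by auto
  have "measure M {\<omega>. f \<omega> \<and> walk \<omega> (Suc (s + n)) = y}
      = (\<Sum>x\<in>bitstrings l. measure M {\<omega>. f \<omega> \<and> walk \<omega> (s+n) = x} * pmf (step_law l p) (bxor x y))"
  proof (rule step_lemma)
    show "f \<in> measurable (PiM {..s+n} (D l p)) (count_space UNIV)"
      using lift_meas[of f "{..s}" "{..s+n}"] fm fl sub by blast
    show "\<And>\<omega>. f (restrict \<omega> {..s+n}) = f \<omega>"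
      using lift_loc[of f "{..s}" "{..s+n}"] fl sub by blast
  qed (rule Suc.prems)
  also have "\<dots> = (\<Sum>x\<in>bitstrings l. measure M {\<omega>. f \<omega>} * (Kf (1 - 2*p) n x0 x * prod_list (map (beta p) (bxor x y))))"
    using Suc p0 p1 by (intro sum.cong) (auto simp: bitstrings_def pmf_step)
  also have "\<dots> = measure M {\<omega>. f \<omega>} * Kf (1 - 2*p) (Suc n) x0 y"
    by (subst sum_distrib_left[symmetric]) (simp add: Kf_step x0 Suc.prems)
  finally show ?case by simp
qed

end


context wk begin

abbreviation "one \<equiv> replicate l True"

definition fA :: "nat \<Rightarrow> (nat \<Rightarrow> bool list) \<Rightarrow> bool" where
  "fA s \<omega> = (walk \<omega> s = one \<and> (\<forall>k<s. walk \<omega> k \<noteq> one))"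

lemma meas_walks:
  "n \<le> Suc s \<Longrightarrow> (\<lambda>\<omega>. map (walk \<omega>) [0..<n]) \<in> measurable (PiM {..s} (D l p)) (count_space UNIV)"
proof (induction n)
  case 0 then show ?case by simp
next
  case (Suc n)
  then have "n \<le> Suc s" "n \<le> s" by auto
  have "(\<lambda>\<omega>. (\<lambda>xs a. xs @ [a]) (map (walk \<omega>) [0..<n]) (walk \<omega> n)) \<in> measurable (PiM {..s} (D l p)) (count_space UNIV)"
    by (rule meas2[OF Suc.IH[OF \<open>n \<le> Suc s\<close>] meas_walk]) (use \<open>n \<le> s\<close> in auto)
  then show ?case by simp
qed

lemma fA_meas: "fA s \<in> measurable (PiM {..s} (D l p)) (count_space UNIV)"
proof -
  have e: "fA s = (\<lambda>\<omega>. (\<lambda>xs a. a = one \<and> one \<notin> set xs) (map (walk \<omega>) [0..<s]) (walk \<omega> s))"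
    by (auto simp: fA_def fun_eq_iff) (metis atLeastLessThan_iff image_eqI le0)
  show ?thesis unfolding e
    by (rule meas2[OF meas_walks meas_walk]) auto
qed

lemma fA_loc: "fA s (restrict \<omega> {..s}) = fA s \<omega>"
  unfolding fA_def using walk_restrict[of _ "{..s}" \<omega>] by auto

lemma fA_M: "fA s \<in> measurable M (count_space UNIV)"
  using meas_M[of "fA s" "{..s}"] fA_meas fA_loc by blast

lemma fA_ev: "{\<omega>. fA s \<omega>} \<in> PM.events"
  using ev_eq[OF fA_M, of s True] by simp

lemma fA_unique: "fA s \<omega> \<Longrightarrow> fA s' \<omega> \<Longrightarrow> s = s'"
  unfolding fA_def by (metis linorder_neqE_nat)

lemma fA_cover: "walk \<omega> t = one \<Longrightarrow> \<exists>s\<le>t. fA s \<omega>"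
proof -
  assume h: "walk \<omega> t = one"
  define s where "s = (LEAST k. walk \<omega> k = one)"
  have "walk \<omega> s = one" unfolding s_def by (rule LeastI[of _ t]) (rule h)
  moreover have "\<forall>k<s. walk \<omega> k \<noteq> one" unfolding s_def using not_less_Least by blast
  moreover have "s \<le> t" unfolding s_def by (rule Least_le) (rule h)
  ultimately show ?thesis by (auto simp: fA_def)
qed

lemma Kf_one: "Kf L m one one = ((1 + L ^ m) / 2) ^ l"
  by (simp add: Kf_def)

lemma renewal:
  "(\<Sum>s\<le>t. measure M {\<omega>. fA s \<omega>} * ((1 + (1 - 2*p) ^ (t - s)) / 2) ^ l) = 1 / 2 ^ l"
proof -
  have ev: "{\<omega>. fA s \<omega> \<and> walk \<omega> (s + (t - s)) = one} \<in> PM.events" for s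
  proof -
    have "{\<omega>. fA s \<omega> \<and> walk \<omega> (s + (t - s)) = one} = {\<omega>. fA s \<omega> = True} \<inter> {\<omega>. walk \<omega> (s + (t - s)) = one}"
      by auto
    then show ?thesis using ev_eq[OF fA_M, of s True] ev_eq[OF meas_walk_M, of "s + (t - s)" one] by simp
  qed
  have ev2: "{\<omega>. fA s \<omega> \<and> walk \<omega> t = one} \<in> PM.events" for s
  proof -
    have "{\<omega>. fA s \<omega> \<and> walk \<omega> t = one} = {\<omega>. fA s \<omega> = True} \<inter> {\<omega>. walk \<omega> t = one}"
      by auto
    then show ?thesis using ev_eq[OF fA_M, of s True] ev_eq[OF meas_walk_M, of t one] by simp
  qed
  have "{\<omega>. walk \<omega> t = one} = (\<Union>s\<in>{..t}. {\<omega>. fA s \<omega> \<and> walk \<omega> (s + (t - s)) = one})"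
    using fA_cover by auto
  then have "1 / 2 ^ l = measure M (\<Union>s\<in>{..t}. {\<omega>. fA s \<omega> \<and> walk \<omega> (s + (t - s)) = one})"
    using prob_walk[of one t] by simp
  also have "\<dots> = (\<Sum>s\<le>t. measure M {\<omega>. fA s \<omega> \<and> walk \<omega> (s + (t - s)) = one})"
    by (rule PM.finite_measure_finite_Union) (use ev ev2 fA_unique in \<open>auto simp: disjoint_family_on_def\<close>)
  also have "\<dots> = (\<Sum>s\<le>t. measure M {\<omega>. fA s \<omega>} * Kf (1 - 2*p) (t - s) one one)"
  proof (rule sum.cong[OF refl])
    fix s
    show "measure M {\<omega>. fA s \<omega> \<and> walk \<omega> (s + (t - s)) = one} = measure M {\<omega>. fA s \<omega>} * Kf (1 - 2*p) (t - s) one one"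
      by (rule prob_renew[OF fA_meas fA_loc]) (auto simp: fA_def)
  qed
  finally show ?thesis by (simp add: Kf_one)
qed

definition Bt :: "nat \<Rightarrow> (nat \<Rightarrow> bool list) set" where
  "Bt t = {\<omega>. \<forall>k\<le>t. walk \<omega> k \<noteq> one}"

lemma Bt_eq: "Bt t = space M - (\<Union>s\<in>{..t}. {\<omega>. fA s \<omega>})"
proof (intro equalityI subsetI)
  fix \<omega> assume "\<omega> \<in> Bt t"
  then show "\<omega> \<in> space M - (\<Union>s\<in>{..t}. {\<omega>. fA s \<omega>})" by (auto simp: Bt_def fA_def)
next
  fix \<omega> assume h: "\<omega> \<in> space M - (\<Union>s\<in>{..t}. {\<omega>. fA s \<omega>})"
  show "\<omega> \<in> Bt t" unfolding Bt_def
  proof (safe)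
    fix k assume "k \<le> t" "walk \<omega> k = one"
    then obtain s where "s \<le> k" "fA s \<omega>" using fA_cover by blast
    then show False using h \<open>k \<le> t\<close> by auto
  qed
qed

lemma union_meas: "measure M (\<Union>s\<in>{..t}. {\<omega>. fA s \<omega>}) = (\<Sum>s\<le>t. measure M {\<omega>. fA s \<omega>})"
  by (rule PM.finite_measure_finite_Union) (use fA_ev fA_unique in \<open>auto simp: disjoint_family_on_def\<close>)

lemma Bt_ev: "Bt t \<in> PM.events"
  unfolding Bt_eq by (rule sets.compl_sets) (intro sets.finite_UN, auto intro: fA_ev)

lemma Bt_meas: "measure M (Bt t) = 1 - (\<Sum>s\<le>t. measure M {\<omega>. fA s \<omega>})"
  unfolding Bt_eq using fA_ev by (subst PM.prob_compl) (auto simp: union_meas)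

lemma F_le1: "(\<Sum>s\<le>t. measure M {\<omega>. fA s \<omega>}) \<le> 1"
  using union_meas[of t] PM.prob_le_1 by metis

lemma suminf_ind_nat: "(\<Sum>t. (if t < n then 1 else 0 :: ennreal)) = of_nat n"
proof -
  have "(\<Sum>t. (if t < n then 1 else 0 :: ennreal)) = (\<Sum>t\<in>{..<n}. (if t < n then 1 else 0 :: ennreal))"
    by (rule suminf_finite) auto
  then show ?thesis by simp
qed

lemma suminf_one_top: "(\<Sum>t::nat. 1 :: ennreal) = \<infinity>"
proof (rule ccontr)
  assume h: "(\<Sum>t::nat. 1 :: ennreal) \<noteq> \<infinity>"
  have "summable (\<lambda>_::nat. 1::real)"
    by (rule summable_suminf_not_top) (use h in auto)
  then have "(\<lambda>_::nat. 1::real) \<longlonglongrightarrow> 0" by (rule summable_LIMSEQ_zero)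
  then show False by (simp add: LIMSEQ_const_iff)
qed

lemma hit_time_sum: "hit_time l \<omega> = (\<Sum>t. indicator (Bt t) \<omega> :: ennreal)"
proof (cases "\<exists>t. walk \<omega> t = one")
  case True
  define n where "n = (LEAST t. walk \<omega> t = one)"
  have "indicator (Bt t) \<omega> = (if t < n then 1 else 0 :: ennreal)" for t
  proof -
    have "\<omega> \<in> Bt t \<longleftrightarrow> t < n"
    proof
      assume "\<omega> \<in> Bt t"
      then have "\<forall>k\<le>t. walk \<omega> k \<noteq> one" by (simp add: Bt_def)
      moreover have "walk \<omega> n = one" unfolding n_def by (rule LeastI_ex[OF True])
      ultimately show "t < n"
      proof -
        assume a: "\<forall>k\<le>t. walk \<omega> k \<noteq> one" "walk \<omega> n = one"
        show "t < n"
        proof (rule ccontr)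
          assume "\<not> t < n"
          then have "n \<le> t" by simp
          then show False using a by blast
        qed
      qed
    next
      assume tn: "t < n"
      show "\<omega> \<in> Bt t" unfolding Bt_def
      proof (safe)
        fix k assume "k \<le> t" "walk \<omega> k = one"
        then have "k < n" using tn by simp
        then have "walk \<omega> k \<noteq> one" unfolding n_def by (rule not_less_Least)
        then show False using \<open>walk \<omega> k = one\<close> by simp
      qed
    qed
    then show ?thesis by simp
  qed
  then show ?thesis using True by (simp add: hit_time_def n_def suminf_ind_nat)
next
  case False
  then have "indicator (Bt t) \<omega> = (1 :: ennreal)" for t by (simp add: Bt_def)
  then show ?thesis using False by (simp add: hit_time_def suminf_one_top)
qed

theorem main:
  "(\<integral>\<^sup>+ \<omega>. hit_time l \<omega> \<partial>M) = ennreal (\<Sum>j = 1..l. real (l choose j) / (1 - (1 - 2 * p) ^ j))"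
proof -
  define f where "f s = measure M {\<omega>. fA s \<omega>}" for s
  have L1: "\<bar>1 - 2 * p\<bar> < 1" using p0 p1 by auto
  have ren: "(\<Sum>s\<le>t. f s * (1 + (1 - 2*p) ^ (t - s)) ^ l) = 1" for t
  proof -
    have "(\<Sum>s\<le>t. f s * (1 + (1 - 2*p) ^ (t - s)) ^ l) = 2 ^ l * (\<Sum>s\<le>t. f s * ((1 + (1 - 2*p) ^ (t - s)) / 2) ^ l)"
      by (simp add: sum_distrib_left power_divide)
    also have "\<dots> = 1" using renewal[of t] by (simp add: f_def)
    finally show ?thesis .
  qed
  have F1: "(\<Sum>s\<le>t. f s) \<le> 1" for t using F_le1 by (simp add: f_def)
  have f0: "0 \<le> f s" for s by (simp add: f_def)
  note an = analytic[of f "1 - 2*p" l, OF f0 L1 ren F1]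
  have "(\<integral>\<^sup>+ \<omega>. hit_time l \<omega> \<partial>M) = (\<integral>\<^sup>+ \<omega>. (\<Sum>t. indicator (Bt t) \<omega>) \<partial>M)"
    by (simp add: hit_time_sum)
  also have "\<dots> = (\<Sum>t. \<integral>\<^sup>+ \<omega>. indicator (Bt t) \<omega> \<partial>M)"
    by (rule nn_integral_suminf) (use Bt_ev in auto)
  also have "\<dots> = (\<Sum>t. ennreal (1 - (\<Sum>s\<le>t. f s)))"
    using Bt_ev by (simp add: PM.emeasure_eq_measure Bt_meas f_def)
  also have "\<dots> = ennreal (\<Sum>t. 1 - (\<Sum>s\<le>t. f s))"
    by (rule suminf_ennreal2) (use F1 an(1) in auto)
  also have "\<dots> = ennreal (\<Sum>j = 1..l. real (l choose j) / (1 - (1 - 2 * p) ^ j))"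
    using an(2) by (simp add: f_def)
  finally show ?thesis .
qed

end

theorem mainTheorem2:
  fixes l :: nat and p :: real
  assumes "l \<ge> 1" and "0 < p" and "p < 1"
  shows "(\<integral>\<^sup>+ \<omega>. hit_time l \<omega> \<partial>walk_space l p)
           = ennreal (\<Sum>j = 1..l. real (l choose j) / (1 - (1 - 2 * p) ^ j))"
proof -
  interpret wk l p using assms by unfold_locales
  show ?thesis by (rule main)
qed

end
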